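(* Let $L>0$, $N\ge1$, and let $x=(x_1,\dots,x_{2N})\in(\mathbb{R}_{>0})^{2N}$ satisfy the highest weight condition and $\sum_{i=1}^{2N}x_i\le L$. Run Algorithm II from $x^{(1)}=x$, and let $u$, $\mu^{(i)}$, $\nu^{(i)}$, $y^{(i)}$ and the runs of zeros be as produced there. Put $\lambda^{(i)}=\sum_{l=1}^i\mu^{(l)}$ and $$q_i=L-2\sum_{k=1}^{u}\min(\lambda^{(i)},\lambda^{(k)})\,\nu^{(k)}\qquad(1\le i\le u).$$ For $1\le i\le u$ and $1\le j\le k^{(i)}$ let $I^{(i)}_j$ be the position in $y^{(i)}$ of the first entry of the $j$th run of zeros, and $r^{(i)}_j=\sum_{l=1}^{I^{(i)}_j-1}y^{(i)}_l$. Then $0\le r^{(i)}_j\le q_i$ for all $1\le i\le u$ and $1\le j\le k^{(i)}$.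
   Context: Highest weight condition: a sequence $x_1,\dots,x_{2n}$ of nonnegative reals satisfies it if $\sum_{i=1}^k(x_{2i-1}-x_{2i})\ge0$ for all $1\le k\le n$. Algorithm II. Set $N^{(1)}=N$, $x^{(1)}=x$. Given $x^{(i)}=(x^{(i)}_1,\dots,x^{(i)}_{2N^{(i)}})$ of positive reals satisfying the highest weight condition: let $\mu^{(i)}=\min_j x^{(i)}_j$ and $y^{(i)}_j=x^{(i)}_j-\mu^{(i)}$. In the (linear, non-cyclic) array $y^{(i)}_1,\dots,y^{(i)}_{2N^{(i)}}$ consider the maximal runs of consecutive zeros (a lone zero counts as a run); say there are $k^{(i)}$ runs, numbered $1,\dots,k^{(i)}$ from left to right, with lengths $n^{(i)}_1,\dots,n^{(i)}_{k^{(i)}}$. Let $N^{(i+1)}=N^{(i)}-\sum_{j}\lceil n^{(i)}_j/2\rceil$ and $\nu^{(i)}=N^{(i)}-N^{(i+1)}$. If $N^{(i+1)}=0$, stop and set $u=i$. Otherwise form $x^{(i+1)}$ from $y^{(i)}$: (a) if a run of zeros is at the left end, delete it; (b) for every run of zeros lying between positive entries $a,b$, delete the zeros if the run length is even, and if odd delete the zeros and also replace $a,b$ by the single entry $a+b$; (c') if a run of zeros is at the right end, preceded by a positive entry $a$, delete the zeros, and if its length is odd also delete $a$. Repeat with $x^{(i+1)}$. *)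

theory Defs
  imports Complex_Main
begin

text \<open>Sequences are real lists; paper position l (1-based) is list index l-1.\<close>

definition hw_cond :: "real list \<Rightarrow> bool" where
  "hw_cond xs \<longleftrightarrow>
     (\<forall>k. 1 \<le> k \<and> k \<le> length xs div 2 \<longrightarrow>
        (\<Sum>i=1..k. xs ! (2*i-2) - xs ! (2*i-1)) \<ge> 0)"

definition alg_mu :: "real list \<Rightarrow> real" where
  "alg_mu xs = Min (set xs)"

definition alg_y :: "real list \<Rightarrow> real list" where
  "alg_y xs = map (\<lambda>a. a - alg_mu xs) xs"

definition run_starts :: "real list \<Rightarrow> nat list" where
  "run_starts ys = filter (\<lambda>p. ys ! p = 0 \<and> (p = 0 \<or> ys ! (p - 1) \<noteq> 0)) [0..<length ys]"

definition run_len :: "real list \<Rightarrow> nat \<Rightarrow> nat" where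
  "run_len ys p = length (takeWhile (\<lambda>a. a = 0) (drop p ys))"

definition alg_nu :: "real list \<Rightarrow> nat" where
  "alg_nu ys = (\<Sum>p \<leftarrow> run_starts ys. (run_len ys p + 1) div 2)"

text \<open>Rules (b) and (c'), applied left to right to a list starting with a positive entry
  (merges chain; on the right end the preceding (possibly merged) entry is deleted).\<close>
function alg_merge :: "real list \<Rightarrow> real list" where
  "alg_merge [] = []"
| "alg_merge (a # rest) =
     (if length (takeWhile (\<lambda>v. v = 0) rest) = 0 then a # alg_merge rest
      else if drop (length (takeWhile (\<lambda>v. v = 0) rest)) rest = [] then
        (if odd (length (takeWhile (\<lambda>v. v = 0) rest)) then [] else [a])
      else if even (length (takeWhile (\<lambda>v. v = 0) rest)) then
        a # alg_merge (drop (length (takeWhile (\<lambda>v. v = 0) rest)) rest)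
      else alg_merge ((a + hd (drop (length (takeWhile (\<lambda>v. v = 0) rest)) rest))
                      # tl (drop (length (takeWhile (\<lambda>v. v = 0) rest)) rest)))"
  by pat_completeness auto
termination
  by (relation "measure length") auto

text \<open>Rule (a) followed by (b), (c'): from y^(i) to x^(i+1).\<close>
definition alg_next :: "real list \<Rightarrow> real list" where
  "alg_next ys = alg_merge (dropWhile (\<lambda>a. a = 0) ys)"

definition alg_x :: "real list \<Rightarrow> nat \<Rightarrow> real list" where
  "alg_x x i = ((alg_next \<circ> alg_y) ^^ (i - 1)) x"

primrec alg_N0 :: "nat \<Rightarrow> real list \<Rightarrow> nat \<Rightarrow> int" where
  "alg_N0 N x 0 = int N"
| "alg_N0 N x (Suc k) = alg_N0 N x k - int (alg_nu (alg_y (alg_x x (Suc k))))"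

definition alg_N :: "nat \<Rightarrow> real list \<Rightarrow> nat \<Rightarrow> int" where
  "alg_N N x i = alg_N0 N x (i - 1)"

definition alg_stop :: "nat \<Rightarrow> real list \<Rightarrow> nat \<Rightarrow> bool" where
  "alg_stop N x u \<longleftrightarrow> 1 \<le> u \<and> alg_N N x (u + 1) = 0 \<and>
     (\<forall>i. 1 \<le> i \<and> i < u \<longrightarrow> alg_N N x (i + 1) \<noteq> 0)"

definition alg_lambda :: "real list \<Rightarrow> nat \<Rightarrow> real" where
  "alg_lambda x i = (\<Sum>l=1..i. alg_mu (alg_x x l))"

definition alg_q :: "real \<Rightarrow> real list \<Rightarrow> nat \<Rightarrow> nat \<Rightarrow> real" where
  "alg_q L x u i = L - 2 * (\<Sum>k=1..u. min (alg_lambda x i) (alg_lambda x k)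
                               * real (alg_nu (alg_y (alg_x x k))))"

end

theory Submission
  imports Defs
begin

lemma rl_cons0: "run_len (a#ys) 0 = (if a = 0 then Suc (run_len ys 0) else 0)"
  by (simp add: run_len_def)

lemma rl_consS: "run_len (a#ys) (Suc q) = run_len ys q"
  by (simp add: run_len_def)

lemma rs_cons: "run_starts (a#ys) = (if a = 0 then 0 # map Suc (filter (\<lambda>q. q \<noteq> 0) (run_starts ys))
   else map Suc (run_starts ys))"
proof -
  have u: "[0..<length (a#ys)] = 0 # map Suc [0..<length ys]"
    by (simp add: upt_conv_Cons map_Suc_upt del: upt_Suc)
  show ?thesis
    unfolding run_starts_def u
    by (auto simp: filter_map o_def nth_Cons' intro!: filter_cong)
qed

definition T :: "real list \<Rightarrow> nat" where
  "T ys = sum_list (map (\<lambda>p. (run_len ys p + 1) div 2) (filter (\<lambda>q. q \<noteq> 0) (run_starts ys)))"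

lemma T_cons: "T (a#ys) = (if a = 0 then T ys else alg_nu ys)"
proof -
  have f: "filter (\<lambda>q. q \<noteq> 0) (map Suc xs) = map Suc xs" for xs :: "nat list"
    by (induction xs) auto
  show ?thesis
    by (simp add: T_def alg_nu_def rs_cons f o_def rl_consS)
qed

lemma T_nil: "T [] = 0"
  by (simp add: T_def run_starts_def)

lemma nu_T: "alg_nu ys = (run_len ys 0 + 1) div 2 + T ys"
proof (cases ys)
  case Nil
  then show ?thesis by (simp add: alg_nu_def T_nil run_starts_def run_len_def)
next
  case (Cons a ys')
  have f: "filter (\<lambda>q. q \<noteq> 0) (map Suc xs) = map Suc xs" for xs :: "nat list"
    by (induction xs) auto
  show ?thesis using Cons
    by (simp add: T_def alg_nu_def rs_cons f o_def rl_consS rl_cons0)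
qed

lemma T_zp: "(\<forall>v\<in>set p. v = 0) \<Longrightarrow> T (p @ zs) = T zs"
  by (induction p) (auto simp: T_cons)

lemma nu_split:
  fixes rest :: "real list"
  defines "n \<equiv> length (takeWhile (\<lambda>v. v = 0) rest)"
  shows "alg_nu rest = (n + 1) div 2 + (case drop n rest of [] \<Rightarrow> 0 | b # r \<Rightarrow> alg_nu r)"
    and "drop n rest \<noteq> [] \<Longrightarrow> hd (drop n rest) \<noteq> 0"
    and "length rest = n + length (drop n rest)"
proof -
  have e: "rest = takeWhile (\<lambda>v. v = 0) rest @ drop n rest"
    unfolding n_def by (simp add: dropWhile_eq_drop[symmetric])
  have z: "\<forall>v\<in>set (takeWhile (\<lambda>v. v = 0) rest). v = 0"
    by (meson set_takeWhileD)
  have hd: "drop n rest \<noteq> [] \<Longrightarrow> hd (drop n rest) \<noteq> 0"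
    unfolding n_def using hd_dropWhile[of "\<lambda>v. v = 0" rest] by (simp add: dropWhile_eq_drop)
  then show "drop n rest \<noteq> [] \<Longrightarrow> hd (drop n rest) \<noteq> 0" .
  have "T rest = T (drop n rest)" using T_zp[OF z] e by metis
  also have "\<dots> = (case drop n rest of [] \<Rightarrow> 0 | b # r \<Rightarrow> alg_nu r)"
    using hd by (cases "drop n rest") (auto simp: T_nil T_cons)
  finally show "alg_nu rest = (n + 1) div 2 + (case drop n rest of [] \<Rightarrow> 0 | b # r \<Rightarrow> alg_nu r)"
    by (simp add: nu_T run_len_def n_def)
  show "length rest = n + length (drop n rest)" unfolding n_def
    using length_takeWhile_le[of "\<lambda>v. v = 0" rest] by simp
qed

declare alg_merge.simps(2)[simp del]

lemma merge_eq:
  fixes rest :: "real list"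
  defines "n \<equiv> length (takeWhile (\<lambda>v. v = 0) rest)"
  shows "alg_merge (a#rest) = (if n = 0 then a # alg_merge rest else if drop n rest = [] then
     (if odd n then [] else [a]) else if even n then a # alg_merge (drop n rest)
     else alg_merge ((a + hd (drop n rest)) # tl (drop n rest)))"
  unfolding n_def by (rule alg_merge.simps(2))

lemma merge_len: "xs \<noteq> [] \<Longrightarrow> length xs \<le> length (alg_merge xs) + 2 * alg_nu (tl xs)"
proof (induction xs rule: alg_merge.induct)
  case 1
  then show ?case by simp
next
  case (2 a rest)
  define n where "n = length (takeWhile (\<lambda>v. v = 0) rest)"
  note ns = nu_split[of rest, folded n_def]
  note me = merge_eq[of a rest, folded n_def]
  show ?case
  proof (cases "n = 0")
    case True
    show ?thesis
    proof (cases rest)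
      case Nil then show ?thesis using me True by simp
    next
      case (Cons b r)
      with ns True have "alg_nu rest = alg_nu r" by simp
      with "2.IH"(1)[folded n_def] True Cons me show ?thesis by simp
    qed
  next
    case nz: False
    show ?thesis
    proof (cases "drop n rest")
      case Nil
      with ns have "alg_nu rest = (n + 1) div 2" "length rest = n" by auto
      with Nil nz me show ?thesis by auto
    next
      case (Cons b r)
      with ns have nu: "alg_nu rest = (n + 1) div 2 + alg_nu r" and ln: "length rest = n + Suc (length r)"
        by auto
      show ?thesis
      proof (cases "even n")
        case True
        with "2.IH"(2)[folded n_def] nz Cons have "length (b#r) \<le> length (alg_merge (b#r)) + 2 * alg_nu r"
          by simp
        with True nz Cons nu ln me show ?thesis by (auto elim!: evenE)
      next
        case False
        with "2.IH"(3)[folded n_def] nz Cons have "length ((a+b)#r) \<le> length (alg_merge ((a+b)#r)) + 2 * alg_nu r"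
          by simp
        with False nz Cons nu ln me show ?thesis by (auto elim!: oddE)
      qed
    qed
  qed
qed


lemma next_len: "length ys \<le> length (alg_next ys) + 2 * alg_nu ys"
proof -
  define n where "n = length (takeWhile (\<lambda>v. v = 0) ys)"
  note ns = nu_split[of ys, folded n_def]
  have an: "alg_next ys = alg_merge (drop n ys)"
    unfolding alg_next_def n_def by (simp add: dropWhile_eq_drop)
  show ?thesis
  proof (cases "drop n ys")
    case Nil
    with ns an show ?thesis by auto
  next
    case (Cons b r)
    with merge_len[of "b#r"] ns an show ?thesis by auto
  qed
qed

lemma zp_sum:
  fixes rest :: "real list"
  defines "n \<equiv> length (takeWhile (\<lambda>v. v = 0) rest)"
  shows "sum_list rest = sum_list (drop n rest)" and "set (drop n rest) \<subseteq> set rest"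
proof -
  have e: "rest = takeWhile (\<lambda>v. v = 0) rest @ drop n rest"
    unfolding n_def by (simp add: dropWhile_eq_drop[symmetric])
  have z: "sum_list (takeWhile (\<lambda>v. v = 0) rest) = 0"
    by (induction rest) auto
  show "sum_list rest = sum_list (drop n rest)"
    by (subst e) (simp add: z)
  show "set (drop n rest) \<subseteq> set rest" by (rule set_drop_subset)
qed

lemma merge_sum: "(\<forall>v\<in>set xs. 0 \<le> v) \<Longrightarrow> (\<forall>v\<in>set (alg_merge xs). 0 \<le> v) \<and> sum_list (alg_merge xs) \<le> sum_list xs"
proof (induction xs rule: alg_merge.induct)
  case 1
  then show ?case by simp
next
  case (2 a rest)
  define n where "n = length (takeWhile (\<lambda>v. v = 0) rest)"
  note zs = zp_sum[of rest, folded n_def]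
  note me = merge_eq[of a rest, folded n_def]
  have a: "0 \<le> a" and r: "\<forall>v\<in>set rest. 0 \<le> v" using "2.prems" by auto
  have d: "\<forall>v\<in>set (drop n rest). 0 \<le> v" using r zs(2) by blast
  have sr: "0 \<le> sum_list rest" using r by (simp add: sum_list_nonneg)
  show ?case
  proof (cases "n = 0")
    case True
    with "2.IH"(1)[folded n_def] r a me show ?thesis by simp
  next
    case nz: False
    show ?thesis
    proof (cases "drop n rest")
      case Nil
      with me a sr nz show ?thesis by auto
    next
      case (Cons b r')
      show ?thesis
      proof (cases "even n")
        case True
        with "2.IH"(2)[folded n_def] nz Cons d me a zs(1) show ?thesis by auto
      next
        case False
        have "\<forall>v\<in>set ((a+b)#r'). 0 \<le> v" using d Cons a by auto
        with False "2.IH"(3)[folded n_def] nz Cons me zs(1) show ?thesis by auto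
      qed
    qed
  qed
qed

lemma next_sum: "(\<forall>v\<in>set ys. 0 \<le> v) \<Longrightarrow> (\<forall>v\<in>set (alg_next ys). 0 \<le> v) \<and> sum_list (alg_next ys) \<le> sum_list ys"
proof -
  assume h: "\<forall>v\<in>set ys. 0 \<le> v"
  define n where "n = length (takeWhile (\<lambda>v. v = 0) ys)"
  note zs = zp_sum[of ys, folded n_def]
  have an: "alg_next ys = alg_merge (drop n ys)"
    unfolding alg_next_def n_def by (simp add: dropWhile_eq_drop)
  have "\<forall>v\<in>set (drop n ys). 0 \<le> v" using h zs(2) by blast
  from merge_sum[OF this] show ?thesis using an zs(1) by simp
qed

lemma y_nonneg: "\<forall>v\<in>set (alg_y xs). 0 \<le> v"
  by (auto simp: alg_y_def alg_mu_def)

lemma y_sum: "sum_list (alg_y xs) = sum_list xs - real (length xs) * alg_mu xs"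
  by (simp add: alg_y_def sum_list_subtractf sum_list_triv)

lemma mu_nonneg: "xs \<noteq> [] \<Longrightarrow> \<forall>v\<in>set xs. 0 \<le> v \<Longrightarrow> 0 \<le> alg_mu xs"
  by (simp add: alg_mu_def)

lemma y_len: "length (alg_y xs) = length xs"
  by (simp add: alg_y_def)


lemma sum_split_ge:
  fixes c :: real and f :: "nat \<Rightarrow> real"
  shows "(\<Sum>k=1..u. (if Suc i \<le> k then c * f k else 0)) = c * (\<Sum>k=Suc i..u. f k)"
proof -
  have "(\<Sum>k=1..u. (if Suc i \<le> k then c * f k else 0)) = (\<Sum>k\<in>{k\<in>{1..u}. Suc i \<le> k}. c * f k)"
    by (rule sum.inter_filter[symmetric]) simp
  also have "{k\<in>{1..u}. Suc i \<le> k} = {Suc i..u}" by auto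
  finally show ?thesis by (simp add: sum_distrib_left)
qed

theorem mainTheorem10:
  fixes L :: real and N u :: nat and x :: "real list"
  assumes "L > 0" and "N \<ge> 1" and "length x = 2 * N"
    and "\<forall>a \<in> set x. a > 0" and "hw_cond x" and "sum_list x \<le> L"
    and "alg_stop N x u"
  shows "\<forall>i j. 1 \<le> i \<and> i \<le> u \<and> 1 \<le> j \<and> j \<le> length (run_starts (alg_y (alg_x x i))) \<longrightarrow>
           0 \<le> sum_list (take (run_starts (alg_y (alg_x x i)) ! (j - 1)) (alg_y (alg_x x i)))
           \<and> sum_list (take (run_starts (alg_y (alg_x x i)) ! (j - 1)) (alg_y (alg_x x i)))
               \<le> alg_q L x u i"
proof -
  define X where "X = alg_x x"
  define mu where "mu l = alg_mu (X l)" for l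
  define nu where "nu l = alg_nu (alg_y (X l))" for l
  define S where "S l = sum_list (X l)" for l
  define Nn where "Nn l = (\<Sum>k=l..u. nu k)" for l
  define lam where "lam i = (\<Sum>l=1..i. mu l)" for i
  have X1: "X 1 = x" by (simp add: X_def alg_x_def)
  have XS: "X (Suc l) = alg_next (alg_y (X l))" if l1: "l \<ge> 1" for l
  proof -
    obtain m where m: "l = Suc m" using l1 by (cases l) auto
    show ?thesis by (simp add: X_def alg_x_def m)
  qed
  have nonneg: "\<forall>v\<in>set (X l). 0 \<le> v" if "l \<ge> 1" for l
    using that
  proof (induction l)
    case 0 then show ?case by simp
  next
    case (Suc l)
    show ?case
    proof (cases "l = 0")
      case True then show ?thesis using X1 assms(4) by (auto intro: less_imp_le)
    next
      case False
      then show ?thesis using XS[of l] next_sum[OF y_nonneg[of "X l"]] by simp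
    qed
  qed
  have N0: "alg_N0 N x k = int N - int (\<Sum>j=1..k. nu j)" for k
    by (induction k) (simp_all add: nu_def X_def)
  have stop: "1 \<le> u" "alg_N0 N x u = 0" "\<And>i. 1 \<le> i \<Longrightarrow> i < u \<Longrightarrow> alg_N0 N x i \<noteq> 0"
    using assms(7) unfolding alg_stop_def alg_N_def by auto
  have Nsum: "N = (\<Sum>j=1..u. nu j)"
  proof -
    have "int N = int (\<Sum>j=1..u. nu j)" using N0[of u] stop(2) by linarith
    then show ?thesis by (simp only: of_nat_eq_iff)
  qed
  have NnN: "alg_N0 N x k = int (Nn (Suc k))" if "k \<le> u" for k
  proof -
    have "(\<Sum>j=1..k + (u-k). nu j) = (\<Sum>j=1..k. nu j) + (\<Sum>j=k+1..k+(u-k). nu j)"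
      by (rule sum.ub_add_nat) simp
    then have "(\<Sum>j=1..u. nu j) = (\<Sum>j=1..k. nu j) + Nn (Suc k)" using that by (simp add: Nn_def)
    then show ?thesis using N0[of k] Nsum by simp
  qed
  have Nnpos: "Nn l > 0" if "1 \<le> l" "l \<le> u" for l
  proof (cases "l = 1")
    case True then show ?thesis using Nsum assms(2) by (simp add: Nn_def)
  next
    case False
    then have "alg_N0 N x (l - 1) \<noteq> 0" using stop(3)[of "l-1"] that by simp
    with NnN[of "l-1"] that show ?thesis by simp
  qed
  have Nnrec: "Nn l = nu l + Nn (Suc l)" if "l \<le> u" for l
    using that by (simp add: Nn_def sum.atLeast_Suc_atMost)
  have len: "2 * Nn l \<le> length (X l)" if "1 \<le> l" "l \<le> u" for l
    using that
  proof (induction l)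
    case 0 then show ?case by simp
  next
    case (Suc l)
    show ?case
    proof (cases "l = 0")
      case True then show ?thesis using X1 assms(3) Nsum by (simp add: Nn_def)
    next
      case False
      have "length (X l) \<le> length (X (Suc l)) + 2 * nu l"
        using next_len[of "alg_y (X l)"] XS[of l] False by (simp add: y_len nu_def)
      with Suc False Nnrec[of l] show ?thesis by simp
    qed
  qed
  have mu_nn: "0 \<le> mu l" if "1 \<le> l" "l \<le> u" for l
  proof -
    have "X l \<noteq> []" using len[OF that] Nnpos[OF that] by auto
    then show ?thesis using mu_nonneg nonneg that by (simp add: mu_def)
  qed
  have ysum: "sum_list (alg_y (X l)) = S l - real (length (X l)) * mu l" for l
    by (simp add: y_sum S_def mu_def)
  have Sstep: "S (Suc l) \<le> S l - real (length (X l)) * mu l" if "1 \<le> l" for l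
    using XS[OF that] next_sum[OF y_nonneg[of "X l"]] ysum[of l] by (simp add: S_def)
  have ystep: "sum_list (alg_y (X l)) \<le> S l - 2 * (mu l * real (Nn l))" if "1 \<le> l" "l \<le> u" for l
  proof -
    have "real (2 * Nn l) * mu l \<le> real (length (X l)) * mu l"
      using len[OF that] mu_nn[OF that] by (intro mult_right_mono) auto
    then show ?thesis using ysum[of l] by (simp add: algebra_simps)
  qed
  have Sbound: "S i \<le> L - 2 * (\<Sum>l=1..<i. mu l * real (Nn l))" if "1 \<le> i" "i \<le> u" for i
    using that
  proof (induction i)
    case 0 then show ?case by simp
  next
    case (Suc i)
    show ?case
    proof (cases "i = 0")
      case True then show ?thesis using X1 assms(6) by (simp add: S_def)
    next
      case False
      have "S (Suc i) \<le> S i - 2 * (mu i * real (Nn i))"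
        using Sstep[of i] ysum[of i] ystep[of i] Suc False by simp
      with Suc False show ?thesis by simp
    qed
  qed
  have ybound: "sum_list (alg_y (X i)) \<le> L - 2 * (\<Sum>l=1..i. mu l * real (Nn l))" if "1 \<le> i" "i \<le> u" for i
    using ystep[OF that] Sbound[OF that] that by (simp add: atLeastLessThanSuc_atLeastAtMost[symmetric])
  have lam_mono: "lam i \<le> lam k" if "i \<le> k" "k \<le> u" for i k
    unfolding lam_def using that mu_nn by (intro sum_mono2) auto
  have ident: "(\<Sum>l=1..i. mu l * real (Nn l)) = (\<Sum>k=1..u. min (lam i) (lam k) * real (nu k))"
    if "i \<le> u" for i
    using that
  proof (induction i)
    case 0
    have "min (lam 0) (lam k) = 0" if "k \<in> {1..u}" for k
      using lam_mono[of 0 k] that by (simp add: lam_def)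
    then show ?case by simp
  next
    case (Suc i)
    have t: "min (lam (Suc i)) (lam k) * real (nu k) = min (lam i) (lam k) * real (nu k)
        + (if Suc i \<le> k then mu (Suc i) * real (nu k) else 0)" if "k \<in> {1..u}" for k
    proof (cases "Suc i \<le> k")
      case True
      then have "lam (Suc i) \<le> lam k" "lam i \<le> lam k" using lam_mono[of "Suc i" k] lam_mono[of i k] that by auto
      moreover have "lam (Suc i) = lam i + mu (Suc i)" by (simp add: lam_def)
      ultimately show ?thesis using True by (simp add: algebra_simps)
    next
      case False
      then have "lam k \<le> lam i" "lam i \<le> lam (Suc i)" using lam_mono[of k i] lam_mono[of i "Suc i"] Suc.prems by auto
      then show ?thesis using False by simp
    qed
    have "(\<Sum>k=1..u. min (lam (Suc i)) (lam k) * real (nu k)) =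
        (\<Sum>k=1..u. min (lam i) (lam k) * real (nu k)) + (\<Sum>k=1..u. (if Suc i \<le> k then mu (Suc i) * real (nu k) else 0))"
      by (simp add: t sum.distrib)
    also have "(\<Sum>k=1..u. (if Suc i \<le> k then mu (Suc i) * real (nu k) else 0)) = mu (Suc i) * real (Nn (Suc i))"
      unfolding Nn_def of_nat_sum by (rule sum_split_ge)
    finally show ?case using Suc by simp
  qed
  show ?thesis
  proof (intro allI impI)
    fix i j
    assume h: "1 \<le> i \<and> i \<le> u \<and> 1 \<le> j \<and> j \<le> length (run_starts (alg_y (alg_x x i)))"
    define y where "y = alg_y (X i)"
    define p where "p = run_starts y ! (j - 1)"
    have yn: "\<forall>v\<in>set y. 0 \<le> v" by (simp add: y_def y_nonneg)
    have t0: "0 \<le> sum_list (take p y)" using yn by (intro sum_list_nonneg) (auto dest: in_set_takeD)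
    have d0: "0 \<le> sum_list (drop p y)" using yn by (intro sum_list_nonneg) (auto dest: in_set_dropD)
    have sy: "sum_list y = sum_list (take p y) + sum_list (drop p y)"
      by (metis append_take_drop_id sum_list_append)
    have q: "alg_q L x u i = L - 2 * (\<Sum>l=1..i. mu l * real (Nn l))"
      using ident[of i] h by (simp add: alg_q_def alg_lambda_def lam_def mu_def nu_def X_def)
    have "sum_list y \<le> alg_q L x u i" using ybound[of i] h q by (simp add: y_def)
    then show "0 \<le> sum_list (take (run_starts (alg_y (alg_x x i)) ! (j - 1)) (alg_y (alg_x x i)))
           \<and> sum_list (take (run_starts (alg_y (alg_x x i)) ! (j - 1)) (alg_y (alg_x x i)))
               \<le> alg_q L x u i"
      using t0 d0 sy by (simp add: y_def p_def X_def)
  qed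
qed

end
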